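(* Let $\mathcal F$ be an exact category with enough injective objects and $\mathcal M$ a subcategory of $\mathcal F$. Then there exists a subcategory $\mathcal N$ such that $(\mathcal M,\mathcal N)$ is a complete cotorsion pair in $\mathcal F$ if and only if $\mathcal M$ is special precovering and idempotent complete (closed under direct summands) in $\mathcal F$.
   Context: A pair $(\mathcal M,\mathcal N)$ of full subcategories of an exact category $\mathcal F$ is a complete cotorsion pair if $\mathcal N=\mathrm{Ker}\,\mathrm{Ext}^1_{\mathcal F}(\mathcal M,-)$, $\mathcal M=\mathrm{Ker}\,\mathrm{Ext}^1_{\mathcal F}(-,\mathcal N)$, $\mathcal M$ is special precovering (every $X\in\mathcal F$ fits in a conflation $0\to N_1\to M_1\to X\to0$ with $M_1\in\mathcal M$, $N_1\in\mathcal N$) and $\mathcal N$ is special preenveloping (every $X$ fits in a conflation $0\to X\to N_2\to M_2\to0$ with $N_2\in\mathcal N$, $M_2\in\mathcal M$). For a single subcategory $\mathcal M$, "special precovering" means every $X\in\mathcal F$ fits in a conflation $0\to K\to M\to X\to 0$ with $M\in\mathcal M$ and $\mathrm{Ext}^1_{\mathcal F}(\mathcal M,K)=0$. *)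

theory Defs
  imports Main
begin

text \<open>Objects have type 'o, morphisms
type 'm. cmp C g f is the composite g after f. A conflation is a tuple
(A, B, X, i, d) standing for the kernel-cokernel pair A --i--> B --d--> X.\<close>

record ('o, 'm) excat =
  Obj  :: "'o set"
  Hom  :: "'o \<Rightarrow> 'o \<Rightarrow> 'm set"
  cmp  :: "'m \<Rightarrow> 'm \<Rightarrow> 'm"
  idm  :: "'o \<Rightarrow> 'm"
  zer  :: "'o \<Rightarrow> 'o \<Rightarrow> 'm"
  pls  :: "'m \<Rightarrow> 'm \<Rightarrow> 'm"
  neg  :: "'m \<Rightarrow> 'm"
  Conf :: "('o \<times> 'o \<times> 'o \<times> 'm \<times> 'm) set"

definition is_category :: "('o, 'm) excat \<Rightarrow> bool" where
  "is_category C \<longleftrightarrow>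
     (\<forall>X Y. Hom C X Y \<noteq> {} \<longrightarrow> X \<in> Obj C \<and> Y \<in> Obj C) \<and>
     (\<forall>X \<in> Obj C. idm C X \<in> Hom C X X) \<and>
     (\<forall>X Y Z f g. f \<in> Hom C X Y \<and> g \<in> Hom C Y Z \<longrightarrow> cmp C g f \<in> Hom C X Z) \<and>
     (\<forall>W X Y Z f g h. f \<in> Hom C W X \<and> g \<in> Hom C X Y \<and> h \<in> Hom C Y Z \<longrightarrow>
         cmp C h (cmp C g f) = cmp C (cmp C h g) f) \<and>
     (\<forall>X Y f. f \<in> Hom C X Y \<longrightarrow> cmp C (idm C Y) f = f \<and> cmp C f (idm C X) = f)"

definition is_preadditive :: "('o, 'm) excat \<Rightarrow> bool" where
  "is_preadditive C \<longleftrightarrow> is_category C \<and>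
     (\<forall>X \<in> Obj C. \<forall>Y \<in> Obj C.
        zer C X Y \<in> Hom C X Y \<and>
        (\<forall>f \<in> Hom C X Y. \<forall>g \<in> Hom C X Y. pls C f g \<in> Hom C X Y) \<and>
        (\<forall>f \<in> Hom C X Y. neg C f \<in> Hom C X Y) \<and>
        (\<forall>f \<in> Hom C X Y. \<forall>g \<in> Hom C X Y. \<forall>h \<in> Hom C X Y.
            pls C (pls C f g) h = pls C f (pls C g h)) \<and>
        (\<forall>f \<in> Hom C X Y. \<forall>g \<in> Hom C X Y. pls C f g = pls C g f) \<and>
        (\<forall>f \<in> Hom C X Y. pls C f (zer C X Y) = f) \<and>
        (\<forall>f \<in> Hom C X Y. pls C f (neg C f) = zer C X Y)) \<and>
     (\<forall>X Y Z f g g'. f \<in> Hom C X Y \<and> g \<in> Hom C Y Z \<and> g' \<in> Hom C Y Z \<longrightarrow>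
         cmp C (pls C g g') f = pls C (cmp C g f) (cmp C g' f)) \<and>
     (\<forall>X Y Z f f' g. f \<in> Hom C X Y \<and> f' \<in> Hom C X Y \<and> g \<in> Hom C Y Z \<longrightarrow>
         cmp C g (pls C f f') = pls C (cmp C g f) (cmp C g f'))"

definition is_zero_object :: "('o, 'm) excat \<Rightarrow> 'o \<Rightarrow> bool" where
  "is_zero_object C Z \<longleftrightarrow> Z \<in> Obj C \<and>
     (\<forall>X \<in> Obj C. Hom C Z X = {zer C Z X} \<and> Hom C X Z = {zer C X Z})"

definition is_biproduct ::
  "('o, 'm) excat \<Rightarrow> 'o \<Rightarrow> 'o \<Rightarrow> 'o \<Rightarrow> 'm \<Rightarrow> 'm \<Rightarrow> 'm \<Rightarrow> 'm \<Rightarrow> bool" where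
  "is_biproduct C A B S i1 i2 p1 p2 \<longleftrightarrow>
     A \<in> Obj C \<and> B \<in> Obj C \<and> S \<in> Obj C \<and>
     i1 \<in> Hom C A S \<and> i2 \<in> Hom C B S \<and> p1 \<in> Hom C S A \<and> p2 \<in> Hom C S B \<and>
     cmp C p1 i1 = idm C A \<and> cmp C p2 i2 = idm C B \<and>
     cmp C p1 i2 = zer C B A \<and> cmp C p2 i1 = zer C A B \<and>
     pls C (cmp C i1 p1) (cmp C i2 p2) = idm C S"

definition is_additive :: "('o, 'm) excat \<Rightarrow> bool" where
  "is_additive C \<longleftrightarrow> is_preadditive C \<and> (\<exists>Z. is_zero_object C Z) \<and>
     (\<forall>A \<in> Obj C. \<forall>B \<in> Obj C. \<exists>S i1 i2 p1 p2. is_biproduct C A B S i1 i2 p1 p2)"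

definition is_kernel :: "('o, 'm) excat \<Rightarrow> 'm \<Rightarrow> 'o \<Rightarrow> 'o \<Rightarrow> 'm \<Rightarrow> 'o \<Rightarrow> bool" where
  "is_kernel C i A B d X \<longleftrightarrow>
     i \<in> Hom C A B \<and> d \<in> Hom C B X \<and> cmp C d i = zer C A X \<and>
     (\<forall>T \<in> Obj C. \<forall>f \<in> Hom C T B. cmp C d f = zer C T X \<longrightarrow>
        (\<exists>g \<in> Hom C T A. cmp C i g = f \<and> (\<forall>g' \<in> Hom C T A. cmp C i g' = f \<longrightarrow> g' = g)))"

definition is_cokernel :: "('o, 'm) excat \<Rightarrow> 'm \<Rightarrow> 'o \<Rightarrow> 'o \<Rightarrow> 'm \<Rightarrow> 'o \<Rightarrow> bool" where
  "is_cokernel C i A B d X \<longleftrightarrow>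
     i \<in> Hom C A B \<and> d \<in> Hom C B X \<and> cmp C d i = zer C A X \<and>
     (\<forall>T \<in> Obj C. \<forall>f \<in> Hom C B T. cmp C f i = zer C A T \<longrightarrow>
        (\<exists>g \<in> Hom C X T. cmp C g d = f \<and> (\<forall>g' \<in> Hom C X T. cmp C g' d = f \<longrightarrow> g' = g)))"

definition is_kc_pair :: "('o, 'm) excat \<Rightarrow> 'o \<Rightarrow> 'o \<Rightarrow> 'o \<Rightarrow> 'm \<Rightarrow> 'm \<Rightarrow> bool" where
  "is_kc_pair C A B X i d \<longleftrightarrow> is_kernel C i A B d X \<and> is_cokernel C i A B d X"

definition is_iso :: "('o, 'm) excat \<Rightarrow> 'm \<Rightarrow> 'o \<Rightarrow> 'o \<Rightarrow> bool" where
  "is_iso C f X Y \<longleftrightarrow> f \<in> Hom C X Y \<and>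
     (\<exists>g \<in> Hom C Y X. cmp C g f = idm C X \<and> cmp C f g = idm C Y)"

definition inflation :: "('o, 'm) excat \<Rightarrow> 'm \<Rightarrow> 'o \<Rightarrow> 'o \<Rightarrow> bool" where
  "inflation C i A B \<longleftrightarrow> (\<exists>X d. (A, B, X, i, d) \<in> Conf C)"

definition deflation :: "('o, 'm) excat \<Rightarrow> 'm \<Rightarrow> 'o \<Rightarrow> 'o \<Rightarrow> bool" where
  "deflation C d B X \<longleftrightarrow> (\<exists>A i. (A, B, X, i, d) \<in> Conf C)"

definition is_pushout ::
  "('o, 'm) excat \<Rightarrow> 'm \<Rightarrow> 'o \<Rightarrow> 'o \<Rightarrow> 'm \<Rightarrow> 'o \<Rightarrow> 'o \<Rightarrow> 'm \<Rightarrow> 'm \<Rightarrow> bool" where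
  "is_pushout C i A B f A' P i' f' \<longleftrightarrow>
     i \<in> Hom C A B \<and> f \<in> Hom C A A' \<and> i' \<in> Hom C A' P \<and> f' \<in> Hom C B P \<and>
     cmp C f' i = cmp C i' f \<and>
     (\<forall>T \<in> Obj C. \<forall>u \<in> Hom C B T. \<forall>v \<in> Hom C A' T. cmp C u i = cmp C v f \<longrightarrow>
        (\<exists>w \<in> Hom C P T. cmp C w f' = u \<and> cmp C w i' = v \<and>
           (\<forall>w' \<in> Hom C P T. cmp C w' f' = u \<and> cmp C w' i' = v \<longrightarrow> w' = w)))"

definition is_pullback ::
  "('o, 'm) excat \<Rightarrow> 'm \<Rightarrow> 'o \<Rightarrow> 'o \<Rightarrow> 'm \<Rightarrow> 'o \<Rightarrow> 'o \<Rightarrow> 'm \<Rightarrow> 'm \<Rightarrow> bool" where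
  "is_pullback C d B X g X' Q d' g' \<longleftrightarrow>
     d \<in> Hom C B X \<and> g \<in> Hom C X' X \<and> d' \<in> Hom C Q X' \<and> g' \<in> Hom C Q B \<and>
     cmp C d g' = cmp C g d' \<and>
     (\<forall>T \<in> Obj C. \<forall>u \<in> Hom C T B. \<forall>v \<in> Hom C T X'. cmp C d u = cmp C g v \<longrightarrow>
        (\<exists>w \<in> Hom C T Q. cmp C g' w = u \<and> cmp C d' w = v \<and>
           (\<forall>w' \<in> Hom C T Q. cmp C g' w' = u \<and> cmp C d' w' = v \<longrightarrow> w' = w)))"

text \<open>Quillen's axioms for an exact structure (as in Buehler, Exact categories).\<close>
definition exact_category :: "('o, 'm) excat \<Rightarrow> bool" where
  "exact_category C \<longleftrightarrow> is_additive C \<and>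
     \<comment> \<open>conflations are kernel-cokernel pairs\<close>
     (\<forall>A B X i d. (A, B, X, i, d) \<in> Conf C \<longrightarrow> is_kc_pair C A B X i d) \<and>
     \<comment> \<open>closed under isomorphisms of kernel-cokernel pairs\<close>
     (\<forall>A B X i d A' B' X' i' d' a b c. (A, B, X, i, d) \<in> Conf C \<and> is_kc_pair C A' B' X' i' d' \<and>
        is_iso C a A A' \<and> is_iso C b B B' \<and> is_iso C c X X' \<and>
        cmp C b i = cmp C i' a \<and> cmp C c d = cmp C d' b \<longrightarrow> (A', B', X', i', d') \<in> Conf C) \<and>
     \<comment> \<open>E0, E0op\<close>
     (\<forall>A \<in> Obj C. inflation C (idm C A) A A) \<and>
     (\<forall>A \<in> Obj C. deflation C (idm C A) A A) \<and>
     \<comment> \<open>E1, E1op\<close>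
     (\<forall>A B D i j. inflation C i A B \<and> inflation C j B D \<longrightarrow> inflation C (cmp C j i) A D) \<and>
     (\<forall>A B D d e. deflation C d A B \<and> deflation C e B D \<longrightarrow> deflation C (cmp C e d) A D) \<and>
     \<comment> \<open>E2: pushouts of inflations exist and are inflations\<close>
     (\<forall>A B A' i f. inflation C i A B \<and> f \<in> Hom C A A' \<longrightarrow>
        (\<exists>P i' f'. is_pushout C i A B f A' P i' f' \<and> inflation C i' A' P)) \<and>
     \<comment> \<open>E2op: pullbacks of deflations exist and are deflations\<close>
     (\<forall>B X X' d g. deflation C d B X \<and> g \<in> Hom C X' X \<longrightarrow>
        (\<exists>Q d' g'. is_pullback C d B X g X' Q d' g' \<and> deflation C d' Q X'))"

text \<open>Ext^1(X, Y) = 0: every conflation Y >-> B ->> X splits, i.e. every element of the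
Yoneda Ext group Ext^1(X, Y) is the class of the split conflation.\<close>
definition ext1_zero :: "('o, 'm) excat \<Rightarrow> 'o \<Rightarrow> 'o \<Rightarrow> bool" where
  "ext1_zero C X Y \<longleftrightarrow>
     (\<forall>B i d. (Y, B, X, i, d) \<in> Conf C \<longrightarrow> (\<exists>s \<in> Hom C X B. cmp C d s = idm C X))"

definition right_perp :: "('o, 'm) excat \<Rightarrow> 'o set \<Rightarrow> 'o set" where
  "right_perp C M = {Y \<in> Obj C. \<forall>X \<in> M. ext1_zero C X Y}"

definition left_perp :: "('o, 'm) excat \<Rightarrow> 'o set \<Rightarrow> 'o set" where
  "left_perp C N = {X \<in> Obj C. \<forall>Y \<in> N. ext1_zero C X Y}"

definition complete_cotorsion_pair :: "('o, 'm) excat \<Rightarrow> 'o set \<Rightarrow> 'o set \<Rightarrow> bool" where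
  "complete_cotorsion_pair C M N \<longleftrightarrow>
     N = right_perp C M \<and> M = left_perp C N \<and>
     (\<forall>X \<in> Obj C. \<exists>N1 M1 i d. (N1, M1, X, i, d) \<in> Conf C \<and> M1 \<in> M \<and> N1 \<in> N) \<and>
     (\<forall>X \<in> Obj C. \<exists>N2 M2 i d. (X, N2, M2, i, d) \<in> Conf C \<and> N2 \<in> N \<and> M2 \<in> M)"

definition special_precovering :: "('o, 'm) excat \<Rightarrow> 'o set \<Rightarrow> bool" where
  "special_precovering C M \<longleftrightarrow>
     (\<forall>X \<in> Obj C. \<exists>K M0 i d. (K, M0, X, i, d) \<in> Conf C \<and> M0 \<in> M \<and>
        (\<forall>M' \<in> M. ext1_zero C M' K))"

definition closed_under_summands :: "('o, 'm) excat \<Rightarrow> 'o set \<Rightarrow> bool" where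
  "closed_under_summands C M \<longleftrightarrow>
     (\<forall>S \<in> M. \<forall>A B i1 i2 p1 p2. is_biproduct C A B S i1 i2 p1 p2 \<longrightarrow> A \<in> M)"

definition injective_object :: "('o, 'm) excat \<Rightarrow> 'o \<Rightarrow> bool" where
  "injective_object C I \<longleftrightarrow> I \<in> Obj C \<and>
     (\<forall>A B X i d f. (A, B, X, i, d) \<in> Conf C \<and> f \<in> Hom C A I \<longrightarrow>
        (\<exists>g \<in> Hom C B I. cmp C g i = f))"

definition enough_injectives :: "('o, 'm) excat \<Rightarrow> bool" where
  "enough_injectives C \<longleftrightarrow>
     (\<forall>X \<in> Obj C. \<exists>I Y i d. (X, I, Y, i, d) \<in> Conf C \<and> injective_object C I)"

end

theory Submission
  imports Defs
begin



locale exc =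
  fixes C :: "('o, 'm) excat"
  assumes exact: "exact_category C"
begin

lemma additive: "is_additive C" using exact unfolding exact_category_def by blast
lemma preadd: "is_preadditive C" using additive unfolding is_additive_def by blast
lemma cat: "is_category C" using preadd unfolding is_preadditive_def by blast

lemma homO: "f \<in> Hom C X Y \<Longrightarrow> X \<in> Obj C \<and> Y \<in> Obj C"
proof -
  assume f: "f \<in> Hom C X Y"
  have "Hom C X Y \<noteq> {} \<longrightarrow> X \<in> Obj C \<and> Y \<in> Obj C" using cat unfolding is_category_def by blast
  then show ?thesis using f by blast
qed
lemma homO1: "f \<in> Hom C X Y \<Longrightarrow> X \<in> Obj C" using homO by blast
lemma homO2: "f \<in> Hom C X Y \<Longrightarrow> Y \<in> Obj C" using homO by blast
lemma cat_parts: "(\<forall>X Y. Hom C X Y \<noteq> {} \<longrightarrow> X \<in> Obj C \<and> Y \<in> Obj C) \<and>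
     (\<forall>X \<in> Obj C. idm C X \<in> Hom C X X) \<and>
     (\<forall>X Y Z f g. f \<in> Hom C X Y \<and> g \<in> Hom C Y Z \<longrightarrow> cmp C g f \<in> Hom C X Z) \<and>
     (\<forall>W X Y Z f g h. f \<in> Hom C W X \<and> g \<in> Hom C X Y \<and> h \<in> Hom C Y Z \<longrightarrow>
         cmp C h (cmp C g f) = cmp C (cmp C h g) f) \<and>
     (\<forall>X Y f. f \<in> Hom C X Y \<longrightarrow> cmp C (idm C Y) f = f \<and> cmp C f (idm C X) = f)"
  using cat unfolding is_category_def .
lemma idH[intro]: "X \<in> Obj C \<Longrightarrow> idm C X \<in> Hom C X X"
  using cat_parts by blast
lemma cmpH[intro]: "f \<in> Hom C X Y \<Longrightarrow> g \<in> Hom C Y Z \<Longrightarrow> cmp C g f \<in> Hom C X Z"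
  using cat_parts by blast
lemma assoc: "f \<in> Hom C W X \<Longrightarrow> g \<in> Hom C X Y \<Longrightarrow> h \<in> Hom C Y Z \<Longrightarrow>
   cmp C (cmp C h g) f = cmp C h (cmp C g f)"
  using cat_parts by metis
lemma idl: "f \<in> Hom C X Y \<Longrightarrow> cmp C (idm C Y) f = f"
  using cat_parts by blast
lemma idr: "f \<in> Hom C X Y \<Longrightarrow> cmp C f (idm C X) = f"
  using cat_parts by blast

lemma pa_parts: "is_category C \<and>
     (\<forall>X \<in> Obj C. \<forall>Y \<in> Obj C.
        zer C X Y \<in> Hom C X Y \<and>
        (\<forall>f \<in> Hom C X Y. \<forall>g \<in> Hom C X Y. pls C f g \<in> Hom C X Y) \<and>
        (\<forall>f \<in> Hom C X Y. neg C f \<in> Hom C X Y) \<and>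
        (\<forall>f \<in> Hom C X Y. \<forall>g \<in> Hom C X Y. \<forall>h \<in> Hom C X Y.
            pls C (pls C f g) h = pls C f (pls C g h)) \<and>
        (\<forall>f \<in> Hom C X Y. \<forall>g \<in> Hom C X Y. pls C f g = pls C g f) \<and>
        (\<forall>f \<in> Hom C X Y. pls C f (zer C X Y) = f) \<and>
        (\<forall>f \<in> Hom C X Y. pls C f (neg C f) = zer C X Y)) \<and>
     (\<forall>X Y Z f g g'. f \<in> Hom C X Y \<and> g \<in> Hom C Y Z \<and> g' \<in> Hom C Y Z \<longrightarrow>
         cmp C (pls C g g') f = pls C (cmp C g f) (cmp C g' f)) \<and>
     (\<forall>X Y Z f f' g. f \<in> Hom C X Y \<and> f' \<in> Hom C X Y \<and> g \<in> Hom C Y Z \<longrightarrow>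
         cmp C g (pls C f f') = pls C (cmp C g f) (cmp C g f'))"
  using preadd unfolding is_preadditive_def .

lemma grp: assumes "X \<in> Obj C" "Y \<in> Obj C" shows
        "zer C X Y \<in> Hom C X Y \<and>
        (\<forall>f \<in> Hom C X Y. \<forall>g \<in> Hom C X Y. pls C f g \<in> Hom C X Y) \<and>
        (\<forall>f \<in> Hom C X Y. neg C f \<in> Hom C X Y) \<and>
        (\<forall>f \<in> Hom C X Y. \<forall>g \<in> Hom C X Y. \<forall>h \<in> Hom C X Y.
            pls C (pls C f g) h = pls C f (pls C g h)) \<and>
        (\<forall>f \<in> Hom C X Y. \<forall>g \<in> Hom C X Y. pls C f g = pls C g f) \<and>
        (\<forall>f \<in> Hom C X Y. pls C f (zer C X Y) = f) \<and>
        (\<forall>f \<in> Hom C X Y. pls C f (neg C f) = zer C X Y)"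
proof -
  have "\<forall>X \<in> Obj C. \<forall>Y \<in> Obj C.
        zer C X Y \<in> Hom C X Y \<and>
        (\<forall>f \<in> Hom C X Y. \<forall>g \<in> Hom C X Y. pls C f g \<in> Hom C X Y) \<and>
        (\<forall>f \<in> Hom C X Y. neg C f \<in> Hom C X Y) \<and>
        (\<forall>f \<in> Hom C X Y. \<forall>g \<in> Hom C X Y. \<forall>h \<in> Hom C X Y.
            pls C (pls C f g) h = pls C f (pls C g h)) \<and>
        (\<forall>f \<in> Hom C X Y. \<forall>g \<in> Hom C X Y. pls C f g = pls C g f) \<and>
        (\<forall>f \<in> Hom C X Y. pls C f (zer C X Y) = f) \<and>
        (\<forall>f \<in> Hom C X Y. pls C f (neg C f) = zer C X Y)" using pa_parts by (elim conjE)
  then show ?thesis using assms by blast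
qed

lemma zerH[intro]: "X \<in> Obj C \<Longrightarrow> Y \<in> Obj C \<Longrightarrow> zer C X Y \<in> Hom C X Y"
  using grp by blast
lemma grpH: assumes "f \<in> Hom C X Y" shows
        "zer C X Y \<in> Hom C X Y \<and>
        (\<forall>f \<in> Hom C X Y. \<forall>g \<in> Hom C X Y. pls C f g \<in> Hom C X Y) \<and>
        (\<forall>f \<in> Hom C X Y. neg C f \<in> Hom C X Y) \<and>
        (\<forall>f \<in> Hom C X Y. \<forall>g \<in> Hom C X Y. \<forall>h \<in> Hom C X Y.
            pls C (pls C f g) h = pls C f (pls C g h)) \<and>
        (\<forall>f \<in> Hom C X Y. \<forall>g \<in> Hom C X Y. pls C f g = pls C g f) \<and>
        (\<forall>f \<in> Hom C X Y. pls C f (zer C X Y) = f) \<and>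
        (\<forall>f \<in> Hom C X Y. pls C f (neg C f) = zer C X Y)"
  using grp[OF homO1[OF assms] homO2[OF assms]] .
lemma plsH[intro]: "f \<in> Hom C X Y \<Longrightarrow> g \<in> Hom C X Y \<Longrightarrow> pls C f g \<in> Hom C X Y"
  using grpH by blast
lemma negH[intro]: "f \<in> Hom C X Y \<Longrightarrow> neg C f \<in> Hom C X Y"
  using grpH by blast
lemma pls_assoc: "f \<in> Hom C X Y \<Longrightarrow> g \<in> Hom C X Y \<Longrightarrow> h \<in> Hom C X Y \<Longrightarrow>
   pls C (pls C f g) h = pls C f (pls C g h)"
  using grpH by blast
lemma pls_comm: "f \<in> Hom C X Y \<Longrightarrow> g \<in> Hom C X Y \<Longrightarrow> pls C f g = pls C g f"
  using grpH by blast
lemma pls_zer: "f \<in> Hom C X Y \<Longrightarrow> pls C f (zer C X Y) = f"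
  using grpH by blast
lemma pls_neg: "f \<in> Hom C X Y \<Longrightarrow> pls C f (neg C f) = zer C X Y"
  using grpH by blast
lemma distl0: "\<forall>X Y Z f g g'. f \<in> Hom C X Y \<and> g \<in> Hom C Y Z \<and> g' \<in> Hom C Y Z \<longrightarrow>
         cmp C (pls C g g') f = pls C (cmp C g f) (cmp C g' f)"
  using pa_parts by (elim conjE)
lemma distr0: "\<forall>X Y Z f f' g. f \<in> Hom C X Y \<and> f' \<in> Hom C X Y \<and> g \<in> Hom C Y Z \<longrightarrow>
         cmp C g (pls C f f') = pls C (cmp C g f) (cmp C g f')"
  using pa_parts by (elim conjE)
lemma distl: "f \<in> Hom C X Y \<Longrightarrow> g \<in> Hom C Y Z \<Longrightarrow> g' \<in> Hom C Y Z \<Longrightarrow>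
   cmp C (pls C g g') f = pls C (cmp C g f) (cmp C g' f)"
  using distl0 by blast
lemma distr: "f \<in> Hom C X Y \<Longrightarrow> f' \<in> Hom C X Y \<Longrightarrow> g \<in> Hom C Y Z \<Longrightarrow>
   cmp C g (pls C f f') = pls C (cmp C g f) (cmp C g f')"
  using distr0 by blast

lemma zer_pls: "f \<in> Hom C X Y \<Longrightarrow> pls C (zer C X Y) f = f"
  by (metis homO pls_comm pls_zer zerH)

lemma idem_zero: assumes a: "a \<in> Hom C X Y" and "pls C a a = a" shows "a = zer C X Y"
proof -
  have "a = pls C a (pls C a (neg C a))" using a by (simp add: pls_neg pls_zer)
  also have "\<dots> = pls C (pls C a a) (neg C a)" using a by (simp add: pls_assoc negH)
  also have "\<dots> = zer C X Y" using assms by (simp add: pls_neg)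
  finally show ?thesis .
qed

lemma neg_unique: assumes a: "a \<in> Hom C X Y" and b: "b \<in> Hom C X Y" and "pls C a b = zer C X Y"
  shows "b = neg C a"
proof -
  have "b = pls C b (pls C a (neg C a))" using a b by (simp add: pls_neg pls_zer)
  also have "\<dots> = pls C (pls C a b) (neg C a)" using a b by (metis pls_assoc pls_comm negH)
  also have "\<dots> = neg C a" using assms by (simp add: zer_pls negH)
  finally show ?thesis .
qed

lemma zer_cmp: assumes f: "f \<in> Hom C X Y" and Z: "Z \<in> Obj C"
  shows "cmp C (zer C Y Z) f = zer C X Z"
proof -
  have Y: "Y \<in> Obj C" using f homO by blast
  have z: "zer C Y Z \<in> Hom C Y Z" using Y Z by blast
  have "cmp C (zer C Y Z) f = cmp C (pls C (zer C Y Z) (zer C Y Z)) f" using z by (simp add: pls_zer)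
  also have "\<dots> = pls C (cmp C (zer C Y Z) f) (cmp C (zer C Y Z) f)" using f z by (simp add: distl)
  finally show ?thesis using f z by (metis cmpH idem_zero)
qed

lemma cmp_zer: assumes f: "f \<in> Hom C Y Z" and W: "W \<in> Obj C"
  shows "cmp C f (zer C W Y) = zer C W Z"
proof -
  have Y: "Y \<in> Obj C" using f homO by blast
  have z: "zer C W Y \<in> Hom C W Y" using Y W by blast
  have "cmp C f (zer C W Y) = cmp C f (pls C (zer C W Y) (zer C W Y))" using z by (simp add: pls_zer)
  also have "\<dots> = pls C (cmp C f (zer C W Y)) (cmp C f (zer C W Y))" using f z by (simp add: distr)
  finally show ?thesis using f z by (metis cmpH idem_zero)
qed

lemma neg_cmp: assumes f: "f \<in> Hom C X Y" and h: "h \<in> Hom C Y Z"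
  shows "cmp C (neg C h) f = neg C (cmp C h f)"
proof -
  have "pls C (cmp C h f) (cmp C (neg C h) f) = cmp C (pls C h (neg C h)) f"
    using f h by (simp add: distl negH)
  also have "\<dots> = zer C X Z" using f h by (simp add: pls_neg zer_cmp homO2)
  finally show ?thesis using f h by (intro neg_unique) auto
qed

lemma cmp_neg: assumes f: "f \<in> Hom C X Y" and h: "h \<in> Hom C Y Z"
  shows "cmp C h (neg C f) = neg C (cmp C h f)"
proof -
  have "pls C (cmp C h f) (cmp C h (neg C f)) = cmp C h (pls C f (neg C f))"
    using f h by (simp add: distr negH)
  also have "\<dots> = zer C X Z" using f h by (simp add: pls_neg cmp_zer homO1)
  finally show ?thesis using f h by (intro neg_unique) auto
qed



end

context exc begin

lemma ex_parts: "is_additive C \<and>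
     (\<forall>A B X i d. (A, B, X, i, d) \<in> Conf C \<longrightarrow> is_kc_pair C A B X i d) \<and>
     (\<forall>A B X i d A' B' X' i' d' a b c. (A, B, X, i, d) \<in> Conf C \<and> is_kc_pair C A' B' X' i' d' \<and>
        is_iso C a A A' \<and> is_iso C b B B' \<and> is_iso C c X X' \<and>
        cmp C b i = cmp C i' a \<and> cmp C c d = cmp C d' b \<longrightarrow> (A', B', X', i', d') \<in> Conf C) \<and>
     (\<forall>A \<in> Obj C. inflation C (idm C A) A A) \<and>
     (\<forall>A \<in> Obj C. deflation C (idm C A) A A) \<and>
     (\<forall>A B D i j. inflation C i A B \<and> inflation C j B D \<longrightarrow> inflation C (cmp C j i) A D) \<and>
     (\<forall>A B D d e. deflation C d A B \<and> deflation C e B D \<longrightarrow> deflation C (cmp C e d) A D) \<and>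
     (\<forall>A B A' i f. inflation C i A B \<and> f \<in> Hom C A A' \<longrightarrow>
        (\<exists>P i' f'. is_pushout C i A B f A' P i' f' \<and> inflation C i' A' P)) \<and>
     (\<forall>B X X' d g. deflation C d B X \<and> g \<in> Hom C X' X \<longrightarrow>
        (\<exists>Q d' g'. is_pullback C d B X g X' Q d' g' \<and> deflation C d' Q X'))"
  using exact unfolding exact_category_def .

lemma conf_kc: assumes "(A, B, X, i, d) \<in> Conf C" shows "is_kc_pair C A B X i d"
proof -
  have "\<forall>A B X i d. (A, B, X, i, d) \<in> Conf C \<longrightarrow> is_kc_pair C A B X i d" using ex_parts by (elim conjE)
  then show ?thesis using assms by blast
qed
lemma infl_comp: assumes "inflation C i A B" "inflation C j B D" shows "inflation C (cmp C j i) A D"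
proof -
  have "\<forall>A B D i j. inflation C i A B \<and> inflation C j B D \<longrightarrow> inflation C (cmp C j i) A D" using ex_parts by (elim conjE)
  then show ?thesis using assms by blast
qed
lemma E2: assumes "inflation C i A B" "f \<in> Hom C A A'" shows
        "\<exists>P i' f'. is_pushout C i A B f A' P i' f' \<and> inflation C i' A' P"
proof -
  have "\<forall>A B A' i f. inflation C i A B \<and> f \<in> Hom C A A' \<longrightarrow>
        (\<exists>P i' f'. is_pushout C i A B f A' P i' f' \<and> inflation C i' A' P)" using ex_parts by (elim conjE)
  then show ?thesis using assms by blast
qed
lemma E2op: assumes "deflation C d B X" "g \<in> Hom C X' X" shows
        "\<exists>Q d' g'. is_pullback C d B X g X' Q d' g' \<and> deflation C d' Q X'"
proof -
  have "\<forall>B X X' d g. deflation C d B X \<and> g \<in> Hom C X' X \<longrightarrow>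
        (\<exists>Q d' g'. is_pullback C d B X g X' Q d' g' \<and> deflation C d' Q X')" using ex_parts by (elim conjE)
  then show ?thesis using assms by blast
qed

lemma kerD: assumes "is_kernel C i A B d X"
  shows "i \<in> Hom C A B" "d \<in> Hom C B X" "cmp C d i = zer C A X"
  using assms unfolding is_kernel_def by auto
lemma cokerD: assumes "is_cokernel C i A B d X"
  shows "i \<in> Hom C A B" "d \<in> Hom C B X" "cmp C d i = zer C A X"
  using assms unfolding is_cokernel_def by auto

lemma ker_factor: assumes "is_kernel C i A B d X" "f \<in> Hom C T B" "cmp C d f = zer C T X"
  shows "\<exists>g \<in> Hom C T A. cmp C i g = f"
  using assms homO1 unfolding is_kernel_def by blast
lemma coker_factor: assumes "is_cokernel C i A B d X" "f \<in> Hom C B T" "cmp C f i = zer C A T"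
  shows "\<exists>g \<in> Hom C X T. cmp C g d = f"
  using assms homO2 unfolding is_cokernel_def by blast

lemma ker_unique: assumes k: "is_kernel C i A B d X" and g1: "g1 \<in> Hom C T A" and g2: "g2 \<in> Hom C T A"
  and e: "cmp C i g1 = cmp C i g2" shows "g1 = g2"
proof -
  note kk = kerD[OF k]
  have T: "T \<in> Obj C" using g1 homO1 by blast
  have f: "cmp C i g1 \<in> Hom C T B" using g1 kk by blast
  have "cmp C d (cmp C i g1) = zer C T X" using assoc[OF g1 kk(1) kk(2)] zer_cmp[OF g1 homO2[OF kk(2)]] kk(3) by simp
  then obtain g where "g \<in> Hom C T A" "\<forall>g' \<in> Hom C T A. cmp C i g' = cmp C i g1 \<longrightarrow> g' = g"
    using k T f unfolding is_kernel_def by metis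
  then show ?thesis using g1 g2 e by metis
qed

lemma coker_unique: assumes k: "is_cokernel C i A B d X" and g1: "g1 \<in> Hom C X T" and g2: "g2 \<in> Hom C X T"
  and e: "cmp C g1 d = cmp C g2 d" shows "g1 = g2"
proof -
  note kk = cokerD[OF k]
  have T: "T \<in> Obj C" using g1 homO2 by blast
  have f: "cmp C g1 d \<in> Hom C B T" using g1 kk by blast
  have "cmp C (cmp C g1 d) i = zer C A T" using assoc[OF kk(1) kk(2) g1] cmp_zer[OF g1 homO1[OF kk(1)]] kk(3) by simp
  then obtain g where "g \<in> Hom C X T" "\<forall>g' \<in> Hom C X T. cmp C g' d = cmp C g1 d \<longrightarrow> g' = g"
    using k T f unfolding is_cokernel_def by metis
  then show ?thesis using g1 g2 e by metis
qed

lemma conf_D: assumes "(A, B, X, i, d) \<in> Conf C"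
  shows "is_kernel C i A B d X" "is_cokernel C i A B d X" "i \<in> Hom C A B" "d \<in> Hom C B X"
    "cmp C d i = zer C A X" "A \<in> Obj C" "B \<in> Obj C" "X \<in> Obj C"
  using conf_kc[OF assms] unfolding is_kc_pair_def by (auto dest: kerD homO1 homO2)

lemma iso_closure: assumes "(A, B, X, i, d) \<in> Conf C" "is_kc_pair C A' B' X' i' d'"
  "is_iso C a A A'" "is_iso C b B B'" "is_iso C c X X'"
  "cmp C b i = cmp C i' a" "cmp C c d = cmp C d' b" shows "(A', B', X', i', d') \<in> Conf C"
proof -
  have "\<forall>A B X i d A' B' X' i' d' a b c. (A, B, X, i, d) \<in> Conf C \<and> is_kc_pair C A' B' X' i' d' \<and>
        is_iso C a A A' \<and> is_iso C b B B' \<and> is_iso C c X X' \<and>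
        cmp C b i = cmp C i' a \<and> cmp C c d = cmp C d' b \<longrightarrow> (A', B', X', i', d') \<in> Conf C"
    using ex_parts by (elim conjE)
  then show ?thesis using assms by blast
qed

lemma id_iso: "X \<in> Obj C \<Longrightarrow> is_iso C (idm C X) X X"
  unfolding is_iso_def using idH idl by blast

lemma conf_of_cokernel: assumes c: "(A, B, Z, i, e) \<in> Conf C" and k: "is_cokernel C i A B d X"
  shows "(A, B, X, i, d) \<in> Conf C"
proof -
  note cc = conf_D[OF c] and kk = cokerD[OF k]
  have X: "X \<in> Obj C" using kk homO2 by blast
  obtain c1 where c1: "c1 \<in> Hom C Z X" "cmp C c1 e = d" using coker_factor[OF cc(2) kk(2) kk(3)] by blast
  obtain c2 where c2: "c2 \<in> Hom C X Z" "cmp C c2 d = e" using coker_factor[OF k cc(4) cc(5)] by blast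
  have i1: "cmp C c2 c1 = idm C Z"
    by (rule coker_unique[OF cc(2)]) (use c1 c2 cc in \<open>auto simp: assoc idl\<close>)
  have i2: "cmp C c1 c2 = idm C X"
    by (rule coker_unique[OF k]) (use c1 c2 kk X in \<open>auto simp: assoc idl\<close>)
  have iso: "is_iso C c1 Z X" unfolding is_iso_def using c1 c2 i1 i2 by blast
  have ker: "is_kernel C i A B d X"
    unfolding is_kernel_def
  proof (intro conjI ballI impI)
    show "i \<in> Hom C A B" "d \<in> Hom C B X" "cmp C d i = zer C A X" using kk by auto
  next
    fix T f assume T: "T \<in> Obj C" and f: "f \<in> Hom C T B" and df: "cmp C d f = zer C T X"
    have "cmp C e f = cmp C (cmp C c2 d) f" using c2 by simp
    also have "\<dots> = cmp C c2 (cmp C d f)" using assoc[OF f kk(2) c2(1)] .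
    also have "\<dots> = zer C T Z" using df cmp_zer[OF c2(1) T] by simp
    finally have "cmp C e f = zer C T Z" .
    then obtain g where g: "g \<in> Hom C T A" "cmp C i g = f" using ker_factor[OF cc(1) f] by blast
    show "\<exists>g\<in>Hom C T A. cmp C i g = f \<and> (\<forall>g'\<in>Hom C T A. cmp C i g' = f \<longrightarrow> g' = g)"
      using g ker_unique[OF cc(1)] by metis
  qed
  show ?thesis
    by (rule iso_closure[OF c _ id_iso[OF cc(6)] id_iso[OF cc(7)] iso])
      (use ker k cc c1 idl[OF cc(3)] idr[OF cc(3)] idr[OF kk(2)] in \<open>auto simp: is_kc_pair_def\<close>)
qed

lemma conf_of_kernel: assumes c: "(A0, B, X, i0, d) \<in> Conf C" and k: "is_kernel C i A B d X"
  shows "(A, B, X, i, d) \<in> Conf C"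
proof -
  note cc = conf_D[OF c] and kk = kerD[OF k]
  have A: "A \<in> Obj C" using kk homO1 by blast
  obtain a1 where a1: "a1 \<in> Hom C A0 A" "cmp C i a1 = i0" using ker_factor[OF k cc(3) cc(5)] by blast
  obtain a2 where a2: "a2 \<in> Hom C A A0" "cmp C i0 a2 = i" using ker_factor[OF cc(1) kk(1) kk(3)] by blast
  have i1: "cmp C a2 a1 = idm C A0"
    by (rule ker_unique[OF cc(1)]) (use a1 a2 cc in \<open>auto simp: assoc[symmetric] idr\<close>)
  have i2: "cmp C a1 a2 = idm C A"
    by (rule ker_unique[OF k]) (use a1 a2 kk A in \<open>auto simp: assoc[symmetric] idr\<close>)
  have iso: "is_iso C a1 A0 A" unfolding is_iso_def using a1 a2 i1 i2 by blast
  have coker: "is_cokernel C i A B d X"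
    unfolding is_cokernel_def
  proof (intro conjI ballI impI)
    show "i \<in> Hom C A B" "d \<in> Hom C B X" "cmp C d i = zer C A X" using kk by auto
  next
    fix T f assume T: "T \<in> Obj C" and f: "f \<in> Hom C B T" and df: "cmp C f i = zer C A T"
    have "cmp C f i0 = cmp C f (cmp C i a1)" using a1 by simp
    also have "\<dots> = cmp C (cmp C f i) a1" using assoc[OF a1(1) kk(1) f] by simp
    also have "\<dots> = zer C A0 T" using df zer_cmp[OF a1(1) T] by simp
    finally have "cmp C f i0 = zer C A0 T" .
    then obtain g where g: "g \<in> Hom C X T" "cmp C g d = f" using coker_factor[OF cc(2) f] by blast
    show "\<exists>g\<in>Hom C X T. cmp C g d = f \<and> (\<forall>g'\<in>Hom C X T. cmp C g' d = f \<longrightarrow> g' = g)"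
      using g coker_unique[OF cc(2)] by metis
  qed
  show ?thesis
    by (rule iso_closure[OF c _ iso id_iso[OF cc(7)] id_iso[OF cc(8)]])
      (use coker k cc a1 idl[OF cc(4)] idr[OF cc(4)] idl[OF cc(3)] in \<open>auto simp: is_kc_pair_def\<close>)
qed

end

context exc begin

lemma pbD: assumes "is_pullback C d B X g X' Q d' g'"
  shows "d \<in> Hom C B X" "g \<in> Hom C X' X" "d' \<in> Hom C Q X'" "g' \<in> Hom C Q B" "cmp C d g' = cmp C g d'"
  using assms unfolding is_pullback_def by auto

lemma pb_factor: assumes "is_pullback C d B X g X' Q d' g'" "u \<in> Hom C T B" "v \<in> Hom C T X'"
  "cmp C d u = cmp C g v" shows "\<exists>w \<in> Hom C T Q. cmp C g' w = u \<and> cmp C d' w = v"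
  using assms homO1 unfolding is_pullback_def by blast

lemma pb_unique: assumes p: "is_pullback C d B X g X' Q d' g'" and w1: "w1 \<in> Hom C T Q" and w2: "w2 \<in> Hom C T Q"
  and e1: "cmp C g' w1 = cmp C g' w2" and e2: "cmp C d' w1 = cmp C d' w2" shows "w1 = w2"
proof -
  note pp = pbD[OF p]
  have T: "T \<in> Obj C" using w1 homO1 by blast
  have u: "cmp C g' w1 \<in> Hom C T B" and v: "cmp C d' w1 \<in> Hom C T X'" using w1 pp by auto
  have "cmp C d (cmp C g' w1) = cmp C g (cmp C d' w1)"
    using assoc[OF w1 pp(4) pp(1)] assoc[OF w1 pp(3) pp(2)] pp(5) by simp
  then obtain w where "w \<in> Hom C T Q" "\<forall>w' \<in> Hom C T Q. cmp C g' w' = cmp C g' w1 \<and> cmp C d' w' = cmp C d' w1 \<longrightarrow> w' = w"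
    using p T u v unfolding is_pullback_def by metis
  then show ?thesis using w1 w2 e1 e2 by metis
qed

lemma pb_sym: "is_pullback C d B X g X' Q d' g' \<Longrightarrow> is_pullback C g X' X d B Q g' d'"
  unfolding is_pullback_def by metis

lemma poD: assumes "is_pushout C i A B f A' P i' f'"
  shows "i \<in> Hom C A B" "f \<in> Hom C A A'" "i' \<in> Hom C A' P" "f' \<in> Hom C B P" "cmp C f' i = cmp C i' f"
  using assms unfolding is_pushout_def by auto

lemma po_factor: assumes "is_pushout C i A B f A' P i' f'" "u \<in> Hom C B T" "v \<in> Hom C A' T"
  "cmp C u i = cmp C v f" shows "\<exists>w \<in> Hom C P T. cmp C w f' = u \<and> cmp C w i' = v"
  using assms homO2 unfolding is_pushout_def by blast

lemma po_unique: assumes p: "is_pushout C i A B f A' P i' f'" and w1: "w1 \<in> Hom C P T" and w2: "w2 \<in> Hom C P T"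
  and e1: "cmp C w1 f' = cmp C w2 f'" and e2: "cmp C w1 i' = cmp C w2 i'" shows "w1 = w2"
proof -
  note pp = poD[OF p]
  have T: "T \<in> Obj C" using w1 homO2 by blast
  have u: "cmp C w1 f' \<in> Hom C B T" and v: "cmp C w1 i' \<in> Hom C A' T" using w1 pp by auto
  have "cmp C (cmp C w1 f') i = cmp C (cmp C w1 i') f"
    using assoc[OF pp(1) pp(4) w1] assoc[OF pp(2) pp(3) w1] pp(5) by simp
  then obtain w where "w \<in> Hom C P T" "\<forall>w' \<in> Hom C P T. cmp C w' f' = cmp C w1 f' \<and> cmp C w' i' = cmp C w1 i' \<longrightarrow> w' = w"
    using p T u v unfolding is_pushout_def by metis
  then show ?thesis using w1 w2 e1 e2 by metis
qed

lemma conf_iso_mid: assumes c: "(A, B, X, i, d) \<in> Conf C" and ph: "\<phi> \<in> Hom C B' B" and ps: "\<psi> \<in> Hom C B B'"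
  and e1: "cmp C \<psi> \<phi> = idm C B'" and e2: "cmp C \<phi> \<psi> = idm C B"
  shows "(A, B', X, cmp C \<psi> i, cmp C d \<phi>) \<in> Conf C"
proof -
  note cc = conf_D[OF c]
  have B': "B' \<in> Obj C" using ph homO1 by blast
  have iH: "cmp C \<psi> i \<in> Hom C A B'" using cc ps by blast
  have dH: "cmp C d \<phi> \<in> Hom C B' X" using cc ph by blast
  have comp: "cmp C (cmp C d \<phi>) (cmp C \<psi> i) = zer C A X"
  proof -
    have "cmp C (cmp C d \<phi>) (cmp C \<psi> i) = cmp C d (cmp C \<phi> (cmp C \<psi> i))" using assoc[OF iH ph cc(4)] .
    also have "\<dots> = cmp C d (cmp C (cmp C \<phi> \<psi>) i)" using assoc[OF cc(3) ps ph] by simp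
    also have "\<dots> = zer C A X" using e2 idl[OF cc(3)] cc(5) by simp
    finally show ?thesis .
  qed
  have ker: "is_kernel C (cmp C \<psi> i) A B' (cmp C d \<phi>) X"
    unfolding is_kernel_def
  proof (intro conjI ballI impI)
    show "cmp C \<psi> i \<in> Hom C A B'" "cmp C d \<phi> \<in> Hom C B' X" "cmp C (cmp C d \<phi>) (cmp C \<psi> i) = zer C A X"
      using iH dH comp by auto
  next
    fix T f assume T: "T \<in> Obj C" and f: "f \<in> Hom C T B'" and df: "cmp C (cmp C d \<phi>) f = zer C T X"
    have pf: "cmp C \<phi> f \<in> Hom C T B" using f ph by blast
    have "cmp C d (cmp C \<phi> f) = zer C T X" using df assoc[OF f ph cc(4)] by simp
    then obtain g where g: "g \<in> Hom C T A" "cmp C i g = cmp C \<phi> f" using ker_factor[OF cc(1) pf] by blast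
    have fg: "cmp C (cmp C \<psi> i) g = f"
    proof -
      have "cmp C (cmp C \<psi> i) g = cmp C \<psi> (cmp C \<phi> f)" using assoc[OF g(1) cc(3) ps] g(2) by simp
      also have "\<dots> = f" using assoc[OF f ph ps] e1 idl[OF f] by simp
      finally show ?thesis .
    qed
    show "\<exists>g\<in>Hom C T A. cmp C (cmp C \<psi> i) g = f \<and> (\<forall>g'\<in>Hom C T A. cmp C (cmp C \<psi> i) g' = f \<longrightarrow> g' = g)"
    proof (intro bexI conjI ballI impI)
      fix g' assume g': "g' \<in> Hom C T A" and e: "cmp C (cmp C \<psi> i) g' = f"
      have "cmp C i g' = cmp C (cmp C \<phi> \<psi>) (cmp C i g')" using idl[OF cmpH[OF g' cc(3)]] e2 by simp
      also have "\<dots> = cmp C \<phi> (cmp C (cmp C \<psi> i) g')"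
        using assoc[OF cmpH[OF g' cc(3)] ps ph] assoc[OF g' cc(3) ps] by simp
      also have "\<dots> = cmp C i g" using e g(2) by simp
      finally show "g' = g" using ker_unique[OF cc(1) g' g(1)] by blast
    qed (use g fg in auto)
  qed
  have coker: "is_cokernel C (cmp C \<psi> i) A B' (cmp C d \<phi>) X"
    unfolding is_cokernel_def
  proof (intro conjI ballI impI)
    show "cmp C \<psi> i \<in> Hom C A B'" "cmp C d \<phi> \<in> Hom C B' X" "cmp C (cmp C d \<phi>) (cmp C \<psi> i) = zer C A X"
      using iH dH comp by auto
  next
    fix T f assume T: "T \<in> Obj C" and f: "f \<in> Hom C B' T" and fi: "cmp C f (cmp C \<psi> i) = zer C A T"
    have pf: "cmp C f \<psi> \<in> Hom C B T" using f ps by blast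
    have "cmp C (cmp C f \<psi>) i = zer C A T" using fi assoc[OF cc(3) ps f] by simp
    then obtain g where g: "g \<in> Hom C X T" "cmp C g d = cmp C f \<psi>" using coker_factor[OF cc(2) pf] by blast
    have fg: "cmp C g (cmp C d \<phi>) = f"
    proof -
      have "cmp C g (cmp C d \<phi>) = cmp C (cmp C f \<psi>) \<phi>" using assoc[OF ph cc(4) g(1)] g(2) by simp
      also have "\<dots> = f" using assoc[OF ph ps f] e1 idr[OF f] by simp
      finally show ?thesis .
    qed
    show "\<exists>g\<in>Hom C X T. cmp C g (cmp C d \<phi>) = f \<and> (\<forall>g'\<in>Hom C X T. cmp C g' (cmp C d \<phi>) = f \<longrightarrow> g' = g)"
    proof (intro bexI conjI ballI impI)
      fix g' assume g': "g' \<in> Hom C X T" and e: "cmp C g' (cmp C d \<phi>) = f"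
      have "cmp C g' d = cmp C (cmp C g' d) (cmp C \<phi> \<psi>)" using idr[OF cmpH[OF cc(4) g']] e2 by simp
      also have "\<dots> = cmp C (cmp C g' (cmp C d \<phi>)) \<psi>"
        using assoc[OF ps ph cmpH[OF cc(4) g']] assoc[OF ph cc(4) g'] by simp
      also have "\<dots> = cmp C g d" using e g(2) by simp
      finally show "g' = g" using coker_unique[OF cc(2) g' g(1)] by blast
    qed (use g fg in auto)
  qed
  have iso: "is_iso C \<psi> B B'" unfolding is_iso_def using ps ph e1 e2 by blast
  show ?thesis
  proof (rule iso_closure[OF c _ id_iso[OF cc(6)] iso id_iso[OF cc(8)]])
    show "is_kc_pair C A B' X (cmp C \<psi> i) (cmp C d \<phi>)" using ker coker unfolding is_kc_pair_def by blast
    show "cmp C \<psi> i = cmp C (cmp C \<psi> i) (idm C A)" using idr[OF iH] by simp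
    show "cmp C (idm C X) d = cmp C (cmp C d \<phi>) \<psi>" using idl[OF cc(4)] assoc[OF ps ph cc(4)] e2 idr[OF cc(4)] by simp
  qed
qed

end

context exc begin

lemma pull_conf: assumes c: "(A, B, X, i, d) \<in> Conf C" and p: "is_pullback C d B X g X' Q d' g'"
  shows "\<exists>i'. (A, Q, X', i', d') \<in> Conf C \<and> cmp C g' i' = i"
proof -
  note cc = conf_D[OF c] and pp = pbD[OF p]
  have "deflation C d B X" unfolding deflation_def using c by blast
  then obtain Q0 d0 g0 where p0: "is_pullback C d B X g X' Q0 d0 g0" and df0: "deflation C d0 Q0 X'"
    using E2op[OF _ pp(2)] by blast
  note pp0 = pbD[OF p0]
  obtain A0 i0 where c0: "(A0, Q0, X', i0, d0) \<in> Conf C" using df0 unfolding deflation_def by blast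
  obtain \<phi> where ph: "\<phi> \<in> Hom C Q Q0" "cmp C g0 \<phi> = g'" "cmp C d0 \<phi> = d'"
    using pb_factor[OF p0 pp(4) pp(3) pp(5)] by blast
  obtain \<psi> where ps: "\<psi> \<in> Hom C Q0 Q" "cmp C g' \<psi> = g0" "cmp C d' \<psi> = d0"
    using pb_factor[OF p pp0(4) pp0(3) pp0(5)] by blast
  have Q: "Q \<in> Obj C" using pp(3) homO1 by blast
  have Q0: "Q0 \<in> Obj C" using pp0(3) homO1 by blast
  have e1: "cmp C \<psi> \<phi> = idm C Q"
  proof (rule pb_unique[OF p cmpH[OF ph(1) ps(1)] idH[OF Q]])
    show "cmp C g' (cmp C \<psi> \<phi>) = cmp C g' (idm C Q)"
      using assoc[OF ph(1) ps(1) pp(4)] ps(2) ph(2) idr[OF pp(4)] by simp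
    show "cmp C d' (cmp C \<psi> \<phi>) = cmp C d' (idm C Q)"
      using assoc[OF ph(1) ps(1) pp(3)] ps(3) ph(3) idr[OF pp(3)] by simp
  qed
  have e2: "cmp C \<phi> \<psi> = idm C Q0"
  proof (rule pb_unique[OF p0 cmpH[OF ps(1) ph(1)] idH[OF Q0]])
    show "cmp C g0 (cmp C \<phi> \<psi>) = cmp C g0 (idm C Q0)"
      using assoc[OF ps(1) ph(1) pp0(4)] ps(2) ph(2) idr[OF pp0(4)] by simp
    show "cmp C d0 (cmp C \<phi> \<psi>) = cmp C d0 (idm C Q0)"
      using assoc[OF ps(1) ph(1) pp0(3)] ps(3) ph(3) idr[OF pp0(3)] by simp
  qed
  have c1: "(A0, Q, X', cmp C \<psi> i0, d') \<in> Conf C"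
    using conf_iso_mid[OF c0 ph(1) ps(1) e1 e2] ph(3) by simp
  have zA: "cmp C d i = cmp C g (zer C A X')"
    using cc(5) cmp_zer[OF pp(2) cc(6)] by simp
  obtain i' where i': "i' \<in> Hom C A Q" "cmp C g' i' = i" "cmp C d' i' = zer C A X'"
    using pb_factor[OF p cc(3) zerH[OF cc(6) homO2[OF pp(3)]] zA] by blast
  have ker: "is_kernel C i' A Q d' X'"
    unfolding is_kernel_def
  proof (intro conjI ballI impI)
    show "i' \<in> Hom C A Q" "d' \<in> Hom C Q X'" "cmp C d' i' = zer C A X'" using i' pp by auto
  next
    fix T f assume T: "T \<in> Obj C" and f: "f \<in> Hom C T Q" and df: "cmp C d' f = zer C T X'"
    have gf: "cmp C g' f \<in> Hom C T B" using f pp by blast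
    have "cmp C d (cmp C g' f) = cmp C g (cmp C d' f)"
      using assoc[OF f pp(4) pp(1)] assoc[OF f pp(3) pp(2)] pp(5) by simp
    also have "\<dots> = zer C T X" using df cmp_zer[OF pp(2) T] by simp
    finally obtain h where h: "h \<in> Hom C T A" "cmp C i h = cmp C g' f"
      using ker_factor[OF cc(1) gf] by blast
    have ih: "cmp C i' h = f"
    proof (rule pb_unique[OF p cmpH[OF h(1) i'(1)] f])
      show "cmp C g' (cmp C i' h) = cmp C g' f" using assoc[OF h(1) i'(1) pp(4)] i'(2) h(2) by simp
      show "cmp C d' (cmp C i' h) = cmp C d' f"
        using assoc[OF h(1) i'(1) pp(3)] i'(3) df zer_cmp[OF h(1) homO2[OF pp(3)]] by simp
    qed
    show "\<exists>h\<in>Hom C T A. cmp C i' h = f \<and> (\<forall>h'\<in>Hom C T A. cmp C i' h' = f \<longrightarrow> h' = h)"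
    proof (intro bexI conjI ballI impI)
      fix h' assume h': "h' \<in> Hom C T A" and e: "cmp C i' h' = f"
      have "cmp C i h' = cmp C i h" using assoc[OF h' i'(1) pp(4)] i'(2) e h(2) by simp
      then show "h' = h" using ker_unique[OF cc(1) h' h(1)] by blast
    qed (use h ih in auto)
  qed
  show ?thesis using conf_of_kernel[OF c1 ker] i'(2) by blast
qed

lemma push_conf: assumes c: "(A, B, X, i, d) \<in> Conf C" and f: "f \<in> Hom C A A'"
  shows "\<exists>P i' f' d'. is_pushout C i A B f A' P i' f' \<and> (A', P, X, i', d') \<in> Conf C \<and> cmp C d' f' = d"
proof -
  note cc = conf_D[OF c]
  have "inflation C i A B" unfolding inflation_def using c by blast
  then obtain P i' f' where p: "is_pushout C i A B f A' P i' f'" and inf: "inflation C i' A' P"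
    using E2[OF _ f] by blast
  note pp = poD[OF p]
  obtain Z e where c0: "(A', P, Z, i', e) \<in> Conf C" using inf unfolding inflation_def by blast
  have A': "A' \<in> Obj C" using f homO2 by blast
  have zA: "cmp C d i = cmp C (zer C A' X) f" using cc(5) zer_cmp[OF f cc(8)] by simp
  obtain d' where d': "d' \<in> Hom C P X" "cmp C d' f' = d" "cmp C d' i' = zer C A' X"
    using po_factor[OF p cc(4) zerH[OF A' cc(8)] zA] by blast
  have coker: "is_cokernel C i' A' P d' X"
    unfolding is_cokernel_def
  proof (intro conjI ballI impI)
    show "i' \<in> Hom C A' P" "d' \<in> Hom C P X" "cmp C d' i' = zer C A' X" using d' pp by auto
  next
    fix T u assume T: "T \<in> Obj C" and u: "u \<in> Hom C P T" and ui: "cmp C u i' = zer C A' T"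
    have uf: "cmp C u f' \<in> Hom C B T" using u pp by blast
    have "cmp C (cmp C u f') i = cmp C (cmp C u i') f"
      using assoc[OF pp(1) pp(4) u] assoc[OF pp(2) pp(3) u] pp(5) by simp
    also have "\<dots> = zer C A T" using ui zer_cmp[OF f T] by simp
    finally obtain v where v: "v \<in> Hom C X T" "cmp C v d = cmp C u f'"
      using coker_factor[OF cc(2) uf] by blast
    have vd: "cmp C v d' = u"
    proof (rule po_unique[OF p cmpH[OF d'(1) v(1)] u])
      show "cmp C (cmp C v d') f' = cmp C u f'" using assoc[OF pp(4) d'(1) v(1)] d'(2) v(2) by simp
      show "cmp C (cmp C v d') i' = cmp C u i'"
        using assoc[OF pp(3) d'(1) v(1)] d'(3) ui cmp_zer[OF v(1) A'] by simp
    qed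
    show "\<exists>v\<in>Hom C X T. cmp C v d' = u \<and> (\<forall>v'\<in>Hom C X T. cmp C v' d' = u \<longrightarrow> v' = v)"
    proof (intro bexI conjI ballI impI)
      fix v' assume v': "v' \<in> Hom C X T" and e: "cmp C v' d' = u"
      have "cmp C v' d = cmp C v d" using assoc[OF pp(4) d'(1) v'] d'(2) e v(2) by simp
      then show "v' = v" using coker_unique[OF cc(2) v' v(1)] by blast
    qed (use v vd in auto)
  qed
  show ?thesis using conf_of_cokernel[OF c0 coker] p d'(2) by blast
qed

end

context exc begin

lemma neg_zer: assumes "X \<in> Obj C" "Y \<in> Obj C" shows "neg C (zer C X Y) = zer C X Y"
proof -
  have z: "zer C X Y \<in> Hom C X Y" using assms by blast
  show ?thesis using neg_unique[OF z z pls_zer[OF z]] by simp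
qed

lemma retract_section: assumes c: "(A, B, X, i, d) \<in> Conf C" and r: "r \<in> Hom C B A"
  and ri: "cmp C r i = idm C A" shows "\<exists>s \<in> Hom C X B. cmp C d s = idm C X"
proof -
  note cc = conf_D[OF c]
  have ir: "cmp C i r \<in> Hom C B B" using r cc by blast
  define t where "t = pls C (idm C B) (neg C (cmp C i r))"
  have tH: "t \<in> Hom C B B" unfolding t_def using ir cc by blast
  have "cmp C t i = pls C (cmp C (idm C B) i) (cmp C (neg C (cmp C i r)) i)"
    unfolding t_def using distl[OF cc(3) idH[OF cc(7)] negH[OF ir]] .
  also have "\<dots> = pls C i (neg C (cmp C (cmp C i r) i))" using idl[OF cc(3)] neg_cmp[OF cc(3) ir] by simp
  also have "\<dots> = pls C i (neg C i)" using assoc[OF cc(3) r cc(3)] ri idr[OF cc(3)] by simp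
  also have "\<dots> = zer C A B" using pls_neg[OF cc(3)] .
  finally obtain s where s: "s \<in> Hom C X B" "cmp C s d = t" using coker_factor[OF cc(2) tH] by blast
  have "cmp C d t = pls C (cmp C d (idm C B)) (cmp C d (neg C (cmp C i r)))"
    unfolding t_def using distr[OF idH[OF cc(7)] negH[OF ir] cc(4)] .
  also have "\<dots> = pls C d (neg C (cmp C d (cmp C i r)))" using idr[OF cc(4)] cmp_neg[OF ir cc(4)] by simp
  also have "\<dots> = pls C d (neg C (zer C B X))"
    using assoc[OF r cc(3) cc(4)] cc(5) zer_cmp[OF r cc(8)] by simp
  also have "\<dots> = d" using neg_zer[OF cc(7) cc(8)] pls_zer[OF cc(4)] by simp
  finally have dt: "cmp C d t = d" .
  have "cmp C (cmp C d s) d = cmp C (idm C X) d"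
    using assoc[OF cc(4) s(1) cc(4)] s(2) dt idl[OF cc(4)] by simp
  then have "cmp C d s = idm C X" using coker_unique[OF cc(2) cmpH[OF s(1) cc(4)] idH[OF cc(8)]] by blast
  then show ?thesis using s by blast
qed

lemma section_biproduct: assumes c: "(A, B, X, i, d) \<in> Conf C" and s: "s \<in> Hom C X B"
  and ds: "cmp C d s = idm C X" shows "\<exists>r. is_biproduct C X A B s i d r"
proof -
  note cc = conf_D[OF c]
  have sd: "cmp C s d \<in> Hom C B B" using s cc by blast
  define t where "t = pls C (idm C B) (neg C (cmp C s d))"
  have tH: "t \<in> Hom C B B" unfolding t_def using sd cc by blast
  have "cmp C d t = pls C (cmp C d (idm C B)) (cmp C d (neg C (cmp C s d)))"
    unfolding t_def using distr[OF idH[OF cc(7)] negH[OF sd] cc(4)] .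
  also have "\<dots> = pls C d (neg C (cmp C d (cmp C s d)))" using idr[OF cc(4)] cmp_neg[OF sd cc(4)] by simp
  also have "\<dots> = pls C d (neg C d)" using assoc[OF cc(4) s cc(4)] ds idl[OF cc(4)] by simp
  also have "\<dots> = zer C B X" using pls_neg[OF cc(4)] .
  finally obtain r where r: "r \<in> Hom C B A" "cmp C i r = t" using ker_factor[OF cc(1) tH] by blast
  have "cmp C i (cmp C r i) = cmp C t i" using assoc[OF cc(3) r(1) cc(3)] r(2) by simp
  also have "\<dots> = pls C (cmp C (idm C B) i) (cmp C (neg C (cmp C s d)) i)"
    unfolding t_def using distl[OF cc(3) idH[OF cc(7)] negH[OF sd]] .
  also have "\<dots> = pls C i (neg C (cmp C (cmp C s d) i))" using idl[OF cc(3)] neg_cmp[OF cc(3) sd] by simp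
  also have "\<dots> = pls C i (neg C (zer C A B))"
    using assoc[OF cc(3) cc(4) s] cc(5) cmp_zer[OF s cc(6)] by simp
  also have "\<dots> = cmp C i (idm C A)" using neg_zer[OF cc(6) cc(7)] pls_zer[OF cc(3)] idr[OF cc(3)] by simp
  finally have ri: "cmp C r i = idm C A" using ker_unique[OF cc(1) cmpH[OF cc(3) r(1)] idH[OF cc(6)]] by blast
  have "cmp C i (cmp C r s) = cmp C t s" using assoc[OF s r(1) cc(3)] r(2) by simp
  also have "\<dots> = pls C (cmp C (idm C B) s) (cmp C (neg C (cmp C s d)) s)"
    unfolding t_def using distl[OF s idH[OF cc(7)] negH[OF sd]] .
  also have "\<dots> = pls C s (neg C (cmp C (cmp C s d) s))" using idl[OF s] neg_cmp[OF s sd] by simp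
  also have "\<dots> = pls C s (neg C s)" using assoc[OF s cc(4) s] ds idr[OF s] by simp
  also have "\<dots> = cmp C i (zer C X A)" using pls_neg[OF s] cmp_zer[OF cc(3) cc(8)] by simp
  finally have rs: "cmp C r s = zer C X A" using ker_unique[OF cc(1) cmpH[OF s r(1)] zerH[OF cc(8) cc(6)]] by blast
  have nH: "neg C (cmp C s d) \<in> Hom C B B" using sd by blast
  have "pls C (cmp C s d) (cmp C i r) = pls C (cmp C s d) (pls C (neg C (cmp C s d)) (idm C B))"
    using r(2) pls_comm[OF idH[OF cc(7)] nH] unfolding t_def by simp
  also have "\<dots> = pls C (pls C (cmp C s d) (neg C (cmp C s d))) (idm C B)"
    using pls_assoc[OF sd nH idH[OF cc(7)]] by simp
  also have "\<dots> = idm C B" using pls_neg[OF sd] zer_pls[OF idH[OF cc(7)]] by simp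
  finally have sum: "pls C (cmp C s d) (cmp C i r) = idm C B" .
  show ?thesis unfolding is_biproduct_def using cc s r(1) ds ri rs sum by blast
qed

lemma ext_closure: assumes ck: "(K, Q, I, k, g) \<in> Conf C" and inj: "injective_object C I"
  and ek: "ext1_zero C M' K" shows "ext1_zero C M' Q"
  unfolding ext1_zero_def
proof (intro allI impI)
  fix E j p assume cj: "(Q, E, M', j, p) \<in> Conf C"
  note kk = conf_D[OF ck] and jj = conf_D[OF cj]
  obtain P i' f' p' where po: "is_pushout C j Q E g I P i' f'" and cp: "(I, P, M', i', p') \<in> Conf C"
    and pf: "cmp C p' f' = p" using push_conf[OF cj kk(4)] by blast
  note pp = poD[OF po] and cpp = conf_D[OF cp]
  obtain r where r: "r \<in> Hom C P I" "cmp C r i' = idm C I"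
    using inj cp idH[OF kk(8)] unfolding injective_object_def by blast
  obtain \<tau> where tau: "\<tau> \<in> Hom C M' P" "cmp C p' \<tau> = idm C M'" using retract_section[OF cp r] by blast
  have "inflation C (cmp C j k) K E"
    using infl_comp[of k K Q j E] ck cj unfolding inflation_def by blast
  then obtain Z c where cz: "(K, E, Z, cmp C j k, c) \<in> Conf C" unfolding inflation_def by blast
  have jk: "cmp C j k \<in> Hom C K E" using kk jj by blast
  have coker: "is_cokernel C (cmp C j k) K E f' P"
    unfolding is_cokernel_def
  proof (intro conjI ballI impI)
    show "cmp C j k \<in> Hom C K E" "f' \<in> Hom C E P" using jk pp by auto
    have "cmp C f' (cmp C j k) = cmp C (cmp C i' g) k" using assoc[OF kk(3) jj(3) pp(4)] pp(5) by simp
    also have "\<dots> = zer C K P" using assoc[OF kk(3) kk(4) pp(3)] kk(5) cmp_zer[OF pp(3) kk(6)] by simp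
    finally show "cmp C f' (cmp C j k) = zer C K P" .
  next
    fix T u assume T: "T \<in> Obj C" and u: "u \<in> Hom C E T" and ui: "cmp C u (cmp C j k) = zer C K T"
    have uj: "cmp C u j \<in> Hom C Q T" using u jj by blast
    have "cmp C (cmp C u j) k = zer C K T" using assoc[OF kk(3) jj(3) u] ui by simp
    then obtain v where v: "v \<in> Hom C I T" "cmp C v g = cmp C u j" using coker_factor[OF kk(2) uj] by blast
    obtain w where w: "w \<in> Hom C P T" "cmp C w f' = u" "cmp C w i' = v"
      using po_factor[OF po u v(1)] v(2) by metis
    show "\<exists>w\<in>Hom C P T. cmp C w f' = u \<and> (\<forall>w'\<in>Hom C P T. cmp C w' f' = u \<longrightarrow> w' = w)"
    proof (intro bexI conjI ballI impI)
      fix w' assume w': "w' \<in> Hom C P T" and e: "cmp C w' f' = u"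
      have "cmp C (cmp C w' i') g = cmp C v g"
        using assoc[OF kk(4) pp(3) w'] pp(5) assoc[OF jj(3) pp(4) w'] e v(2) by simp
      then have "cmp C w' i' = v" using coker_unique[OF kk(2) cmpH[OF pp(3) w'] v(1)] by blast
      then show "w' = w" using po_unique[OF po w' w(1)] e w by simp
    qed (use w in auto)
  qed
  have cf: "(K, E, P, cmp C j k, f') \<in> Conf C" using conf_of_cokernel[OF cz coker] .
  have "deflation C f' E P" using cf unfolding deflation_def by blast
  then obtain Q2 d2 g2 where pb: "is_pullback C f' E P \<tau> M' Q2 d2 g2" using E2op[OF _ tau(1)] by blast
  note pbb = pbD[OF pb]
  obtain i2 where c2: "(K, Q2, M', i2, d2) \<in> Conf C" using pull_conf[OF cf pb] by blast
  obtain \<sigma>0 where s0: "\<sigma>0 \<in> Hom C M' Q2" "cmp C d2 \<sigma>0 = idm C M'" using ek c2 unfolding ext1_zero_def by blast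
  have sH: "cmp C g2 \<sigma>0 \<in> Hom C M' E" using s0 pbb by blast
  have "cmp C p (cmp C g2 \<sigma>0) = cmp C p' (cmp C (cmp C f' g2) \<sigma>0)"
    using pf assoc[OF s0(1) pbb(4) pbb(1)] assoc[OF sH pp(4) cpp(4)] by simp
  also have "\<dots> = cmp C (cmp C p' \<tau>) (cmp C d2 \<sigma>0)"
    using pbb(5) assoc[OF s0(1) pbb(3) tau(1)] assoc[OF cmpH[OF s0(1) pbb(3)] tau(1) cpp(4)] by simp
  also have "\<dots> = idm C M'" using tau(2) s0(2) idl[OF idH[OF jj(8)]] by simp
  finally show "\<exists>s\<in>Hom C M' E. cmp C p s = idm C M'" using sH by blast
qed

end


theorem mainTheorem10:
  fixes C :: "('o, 'm) excat" and M :: "'o set"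
  assumes "exact_category C"
    and "enough_injectives C"
    and "M \<subseteq> Obj C"
  shows "(\<exists>N. complete_cotorsion_pair C M N) \<longleftrightarrow>
           (special_precovering C M \<and> closed_under_summands C M)"
proof -
  interpret exc C by (unfold_locales) (rule assms(1))
  show ?thesis
  proof
    assume "\<exists>N. complete_cotorsion_pair C M N"
    then obtain N where NM: "N = right_perp C M" and MN: "M = left_perp C N"
      and pc: "\<forall>X \<in> Obj C. \<exists>N1 M1 i d. (N1, M1, X, i, d) \<in> Conf C \<and> M1 \<in> M \<and> N1 \<in> N"
      unfolding complete_cotorsion_pair_def by blast
    have sp: "special_precovering C M"
      unfolding special_precovering_def
    proof
      fix X assume "X \<in> Obj C"
      then obtain N1 M1 i d where "(N1, M1, X, i, d) \<in> Conf C" "M1 \<in> M" "N1 \<in> N" using pc by blast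
      then show "\<exists>K M0 i d. (K, M0, X, i, d) \<in> Conf C \<and> M0 \<in> M \<and> (\<forall>M'\<in>M. ext1_zero C M' K)"
        using NM unfolding right_perp_def by blast
    qed
    have cs: "closed_under_summands C M"
      unfolding closed_under_summands_def
    proof (intro ballI allI impI)
      fix S A B i1 i2 p1 p2 assume S: "S \<in> M" and bp: "is_biproduct C A B S i1 i2 p1 p2"
      have bpp: "A \<in> Obj C" "i1 \<in> Hom C A S" "p1 \<in> Hom C S A" "cmp C p1 i1 = idm C A"
        using bp unfolding is_biproduct_def by auto
      have "A \<in> left_perp C N"
        unfolding left_perp_def
      proof (intro CollectI conjI ballI)
        show "A \<in> Obj C" using bpp by blast
        fix Y assume Y: "Y \<in> N"
        show "ext1_zero C A Y" unfolding ext1_zero_def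
        proof (intro allI impI)
          fix B0 i d assume c: "(Y, B0, A, i, d) \<in> Conf C"
          note cc = conf_D[OF c]
          have "deflation C d B0 A" using c unfolding deflation_def by blast
          then obtain Q d' g' where pb: "is_pullback C d B0 A p1 S Q d' g'" using E2op[OF _ bpp(3)] by blast
          note pbb = pbD[OF pb]
          obtain i' where c': "(Y, Q, S, i', d') \<in> Conf C" using pull_conf[OF c pb] by blast
          have "ext1_zero C S Y" using Y S NM unfolding right_perp_def by blast
          then obtain s where s: "s \<in> Hom C S Q" "cmp C d' s = idm C S" using c' unfolding ext1_zero_def by blast
          have si: "cmp C s i1 \<in> Hom C A Q" using s bpp by blast
          have "cmp C d (cmp C g' (cmp C s i1)) = cmp C (cmp C p1 d') (cmp C s i1)"
            using assoc[OF si pbb(4) pbb(1)] pbb(5) by simp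
          also have "\<dots> = cmp C p1 (cmp C (cmp C d' s) i1)"
            using assoc[OF si pbb(3) pbb(2)] assoc[OF bpp(2) s(1) pbb(3)] by simp
          also have "\<dots> = idm C A" using s(2) idl[OF bpp(2)] bpp(4) by simp
          finally show "\<exists>s\<in>Hom C A B0. cmp C d s = idm C A" using si pbb by blast
        qed
      qed
      then show "A \<in> M" using MN by simp
    qed
    show "special_precovering C M \<and> closed_under_summands C M" using sp cs by blast
  next
    assume "special_precovering C M \<and> closed_under_summands C M"
    then have sp: "\<forall>X \<in> Obj C. \<exists>K M0 i d. (K, M0, X, i, d) \<in> Conf C \<and> M0 \<in> M \<and>
        (\<forall>M' \<in> M. ext1_zero C M' K)" and cs: "closed_under_summands C M"
      unfolding special_precovering_def by blast+
    define N where "N = right_perp C M"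
    have pc: "\<forall>X \<in> Obj C. \<exists>N1 M1 i d. (N1, M1, X, i, d) \<in> Conf C \<and> M1 \<in> M \<and> N1 \<in> N"
    proof
      fix X assume "X \<in> Obj C"
      then obtain K M0 i d where c: "(K, M0, X, i, d) \<in> Conf C" "M0 \<in> M" "\<forall>M' \<in> M. ext1_zero C M' K"
        using sp by blast
      then have "K \<in> N" unfolding N_def right_perp_def using conf_D(6)[OF c(1)] by blast
      then show "\<exists>N1 M1 i d. (N1, M1, X, i, d) \<in> Conf C \<and> M1 \<in> M \<and> N1 \<in> N" using c by blast
    qed
    have MN: "M = left_perp C N"
    proof
      show "M \<subseteq> left_perp C N" using assms(3) unfolding left_perp_def N_def right_perp_def by blast
    next
      show "left_perp C N \<subseteq> M"
      proof
        fix X assume X: "X \<in> left_perp C N"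
        then have XO: "X \<in> Obj C" unfolding left_perp_def by blast
        obtain K M0 i d where c: "(K, M0, X, i, d) \<in> Conf C" "M0 \<in> M" "K \<in> N" using pc XO by blast
        have "ext1_zero C X K" using X c(3) unfolding left_perp_def by blast
        then obtain s where s: "s \<in> Hom C X M0" "cmp C d s = idm C X" using c(1) unfolding ext1_zero_def by blast
        obtain r where "is_biproduct C X K M0 s i d r" using section_biproduct[OF c(1) s] by blast
        then show "X \<in> M" using cs c(2) unfolding closed_under_summands_def by blast
      qed
    qed
    have pe: "\<forall>X \<in> Obj C. \<exists>N2 M2 i d. (X, N2, M2, i, d) \<in> Conf C \<and> N2 \<in> N \<and> M2 \<in> M"
    proof
      fix X assume X: "X \<in> Obj C"
      obtain I Y x e where cx: "(X, I, Y, x, e) \<in> Conf C" and inj: "injective_object C I"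
        using assms(2) X unfolding enough_injectives_def by blast
      note cxx = conf_D[OF cx]
      obtain K M0 k d where ck: "(K, M0, Y, k, d) \<in> Conf C" "M0 \<in> M" "\<forall>M' \<in> M. ext1_zero C M' K"
        using sp cxx(8) by blast
      note ckk = conf_D[OF ck(1)]
      have "deflation C e I Y" using cx unfolding deflation_def by blast
      then obtain P d1 g1 where pb: "is_pullback C e I Y d M0 P d1 g1" using E2op[OF _ ckk(4)] by blast
      obtain x1 where c1: "(X, P, M0, x1, d1) \<in> Conf C" using pull_conf[OF cx pb] by blast
      obtain k1 where c2: "(K, P, I, k1, g1) \<in> Conf C" using pull_conf[OF ck(1) pb_sym[OF pb]] by blast
      have "P \<in> N" unfolding N_def right_perp_def
        using conf_D(7)[OF c1] ext_closure[OF c2 inj] ck(3) by blast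
      then show "\<exists>N2 M2 i d. (X, N2, M2, i, d) \<in> Conf C \<and> N2 \<in> N \<and> M2 \<in> M" using c1 ck(2) by blast
    qed
    have "complete_cotorsion_pair C M N"
      unfolding complete_cotorsion_pair_def using N_def MN pc pe by blast
    then show "\<exists>N. complete_cotorsion_pair C M N" by blast
  qed
qed


end
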